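(* Let $\Phi\subset\mathbb{C}$ be a symbol constellation with at least two distinct points, let $\sigma^2>0$, and let $M\geq 2$ be a power of $2$. Consider the AVC corresponding to securely precoded OFDM (SP-OFDM), with input alphabet $\Phi$, state (jamming) alphabet $\mathbb{C}$ and output $R = S + e^{j\Theta}J + N$, where $\Theta$ is uniformly distributed on $\{2\pi i/M : i=0,1,\dots,M-1\}$, $N\sim\mathcal{CN}(0,\sigma^2)$, and $\Theta$, $N$ are independent of each other and of $(S,J)$; i.e. its transition density is $W(r\mid s,x)=\frac{1}{M}\sum_{i=0}^{M-1}\frac{1}{\pi\sigma^2}\exp\!\big(-|r-s-x e^{j2\pi i/M}|^2/\sigma^2\big)$. Then there is no auxiliary channel $\pi:\Phi\to\mathbb{C}$ that symmetrizes this AVC (the set of symmetrizing channels is empty); in particular the AVC is not $l$-symmetrizable.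
   Context: Definitions (Csiszár–Narayan). Let $W(r\mid s,x)$ be the conditional density of the channel output $R\in\mathbb{C}$ given input $s\in\Phi$ and state $x\in\mathbb{C}$. An auxiliary channel $\pi:\Phi\to\mathbb{C}$ is a family of probability measures $F_\pi(\cdot\mid s)$ on $\mathbb{C}$, $s\in\Phi$. The AVC is symmetrizable via $\pi$ if for all $s,s'\in\Phi$ and all $r\in\mathbb{C}$, $\int_{\mathbb{C}} W(r\mid s,x)\,dF_\pi(x\mid s')=\int_{\mathbb{C}} W(r\mid s',x)\,dF_\pi(x\mid s)$. The AVC is $l$-symmetrizable (under an average jamming power constraint) if there is such a symmetrizing $\pi$ with $\int_{\mathbb{C}}|x|^2\,dF_\pi(x\mid s)<\infty$ for all $s\in\Phi$. *)

theory Defs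
  imports "HOL-Probability.Probability"
begin

definition sp_ofdm_W :: "nat \<Rightarrow> real \<Rightarrow> complex \<Rightarrow> complex \<Rightarrow> complex \<Rightarrow> real" where
  "sp_ofdm_W M \<sigma>2 r s x =
     (1 / real M) * (\<Sum>i<M. (1 / (pi * \<sigma>2)) *
        exp (- (cmod (r - s - x * cis (2 * pi * real i / real M)))\<^sup>2 / \<sigma>2))"

definition aux_channel :: "complex set \<Rightarrow> (complex \<Rightarrow> complex measure) \<Rightarrow> bool" where
  "aux_channel \<Phi> F \<longleftrightarrow> (\<forall>s\<in>\<Phi>. prob_space (F s) \<and> sets (F s) = sets borel)"

definition symmetrizes :: "(complex \<Rightarrow> complex \<Rightarrow> complex \<Rightarrow> real) \<Rightarrow> complex set
    \<Rightarrow> (complex \<Rightarrow> complex measure) \<Rightarrow> bool" where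
  "symmetrizes W \<Phi> F \<longleftrightarrow>
     (\<forall>s\<in>\<Phi>. \<forall>s'\<in>\<Phi>. \<forall>r. (LINT x|F s'. W r s x) = (LINT x|F s. W r s' x))"

definition l_symmetrizable :: "(complex \<Rightarrow> complex \<Rightarrow> complex \<Rightarrow> real) \<Rightarrow> complex set \<Rightarrow> bool" where
  "l_symmetrizable W \<Phi> \<longleftrightarrow>
     (\<exists>F. aux_channel \<Phi> F \<and> symmetrizes W \<Phi> F \<and>
          (\<forall>s\<in>\<Phi>. (\<integral>\<^sup>+ x. ennreal ((cmod x)\<^sup>2) \<partial>F s) < \<infinity>))"

end

theory Submission
  imports Defs "HOL-Real_Asymp.Real_Asymp"
begin

lemma sum_double: "sum (f::nat\<Rightarrow>real) {..<k+k} = sum f {..<k} + sum (\<lambda>i. f (i+k)) {..<k}"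
proof -
  have U: "{..<k+k} = {..<k} \<union> {k..<k+k}" by auto
  have "sum f ({..<k} \<union> {k..<k+k}) = sum f {..<k} + sum f {k..<k+k}"
    by (rule sum.union_disjoint) auto
  then have "sum f {..<k+k} = sum f {..<k} + sum f {k..<k+k}"
    by (simp only: U)
  also have "sum f {k..<k+k} = sum (\<lambda>i. f (i+k)) {0..<k}"
    using sum.shift_bounds_nat_ivl[of f 0 k k] by simp
  finally show ?thesis by (simp add: atLeast0LessThan)
qed

lemma cis_half: "k > 0 \<Longrightarrow> cis (2 * pi * real (i+k) / real (k+k)) = - cis (2 * pi * real i / real (k+k))"
proof -
  assume "k > 0"
  then have "2 * pi * real (i+k) / real (k+k) = 2 * pi * real i / real (k+k) + pi"
    by (simp add: field_simps)
  then show ?thesis by (simp add: cis_mult[symmetric])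
qed

lemma cmod_refl: "cmod (2 * s - r - s - x * c) = cmod (r - s - x * (- c))"
proof -
  have "2 * s - r - s - x * c = -(r - s - x * (- c))" by (simp add: algebra_simps)
  then show ?thesis by (metis norm_minus_cancel)
qed

lemma W_sym:
  assumes "k > 0"
  shows "sp_ofdm_W (k+k) \<sigma>2 (2 * s - r) s x = sp_ofdm_W (k+k) \<sigma>2 r s x"
proof -
  define f where "f r i = (1 / (pi * \<sigma>2)) *
        exp (- (cmod (r - s - x * cis (2 * pi * real i / real (k+k))))\<^sup>2 / \<sigma>2)" for r i
  have A: "f (2 * s - r) i = f r (i+k)" for i
    unfolding f_def cmod_refl cis_half[OF assms] ..
  have B: "f (2 * s - r) (i+k) = f r i" for i
    unfolding f_def cis_half[OF assms] cmod_refl minus_minus ..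
  have "sum (f (2 * s - r)) {..<k+k} = sum (f (2 * s - r)) {..<k} + sum (\<lambda>i. f (2 * s - r) (i+k)) {..<k}"
    by (rule sum_double)
  also have "\<dots> = sum (\<lambda>i. f r (i+k)) {..<k} + sum (f r) {..<k}"
  proof -
    have "sum (f (2 * s - r)) {..<k} = sum (\<lambda>i. f r (i+k)) {..<k}" by (rule sum.cong[OF refl A])
    moreover have "sum (\<lambda>i. f (2 * s - r) (i+k)) {..<k} = sum (f r) {..<k}" by (rule sum.cong[OF refl B])
    ultimately show ?thesis by (rule arg_cong2[where f="(+)"])
  qed
  also have "\<dots> = sum (f r) {..<k} + sum (\<lambda>i. f r (i+k)) {..<k}"
    by (rule add.commute)
  also have "\<dots> = sum (f r) {..<k+k}"
    by (rule sum_double[symmetric])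
  finally have "sum (f (2 * s - r)) {..<k+k} = sum (f r) {..<k+k}" .
  moreover have W: "sp_ofdm_W (k+k) \<sigma>2 q s x = 1 / real (k+k) * sum (f q) {..<k+k}" for q
    unfolding sp_ofdm_W_def f_def by (rule refl)
  ultimately show ?thesis by (simp only: W)
qed

lemma t1: fixes c b s :: real assumes "c > 0" "s > 0"
  shows "(\<lambda>n. exp (- (real n * c - b)\<^sup>2 / s)) \<longlonglongrightarrow> 0"
  using assms by real_asymp

lemma exp_gauss_lim: fixes d a :: complex and s :: real assumes "d \<noteq> 0" "s > 0"
  shows "(\<lambda>n. exp (- (cmod (of_nat n * d + a))\<^sup>2 / s)) \<longlonglongrightarrow> 0"
proof (rule tendsto_sandwich[OF _ _ tendsto_const t1])
  show "\<forall>\<^sub>F n in sequentially. 0 \<le> exp (- (cmod (of_nat n * d + a))\<^sup>2 / s)" by simp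
  have "cmod d > 0" using assms by simp
  then obtain N where N: "real N * cmod d \<ge> cmod a"
    using reals_Archimedean3[OF \<open>cmod d > 0\<close>, rule_format, of "cmod a"] by (auto intro: less_imp_le)
  show "\<forall>\<^sub>F n in sequentially. exp (- (cmod (of_nat n * d + a))\<^sup>2 / s) \<le> exp (- (real n * cmod d - cmod a)\<^sup>2 / s)"
  proof (rule eventually_sequentiallyI[of N])
    fix n assume "N \<le> n"
    then have "real n * cmod d \<ge> cmod a" using N \<open>cmod d > 0\<close>
      by (smt (verit) mult_right_mono of_nat_le_iff)
    moreover have "cmod (of_nat n * d + a) \<ge> real n * cmod d - cmod a"
      using norm_diff_ineq[of "of_nat n * d" "a"] by (simp add: norm_mult)
    ultimately have "(real n * cmod d - cmod a)\<^sup>2 \<le> (cmod (of_nat n * d + a))\<^sup>2"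
      by (intro power_mono) auto
    then show "exp (- (cmod (of_nat n * d + a))\<^sup>2 / s) \<le> exp (- (real n * cmod d - cmod a)\<^sup>2 / s)"
      using assms by (simp add: divide_right_mono)
  qed
  show "cmod d > 0" by fact
  show "s > 0" by fact
qed

lemma W_lim:
  assumes "d \<noteq> 0" "\<sigma>2 > 0"
  shows "(\<lambda>n. sp_ofdm_W M \<sigma>2 (of_nat n * d) s x) \<longlonglongrightarrow> 0"
proof -
  have "(\<lambda>n. (1 / real M) * (\<Sum>i<M. (1 / (pi * \<sigma>2)) *
        exp (- (cmod (of_nat n * d + (- s - x * cis (2 * pi * real i / real M))))\<^sup>2 / \<sigma>2)))
        \<longlonglongrightarrow> 0"
    by (intro tendsto_mult_right_zero tendsto_null_sum tendsto_mult_right_zero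
        exp_gauss_lim assms)
  then show ?thesis unfolding sp_ofdm_W_def by (simp add: algebra_simps)
qed

lemma W_pos:
  assumes "M > 0" "\<sigma>2 > 0"
  shows "sp_ofdm_W M \<sigma>2 r s x > 0"
  unfolding sp_ofdm_W_def using assms
  by (intro mult_pos_pos sum_pos) auto

lemma W_le:
  assumes "M > 0" "\<sigma>2 > 0"
  shows "sp_ofdm_W M \<sigma>2 r s x \<le> 1 / (pi * \<sigma>2)"
proof -
  define T where "T = (\<Sum>i<M. (1 / (pi * \<sigma>2)) *
        exp (- (cmod (r - s - x * cis (2 * pi * real i / real M)))\<^sup>2 / \<sigma>2))"
  have "T \<le> (\<Sum>i<M. (1 / (pi * \<sigma>2)) * 1)"
    unfolding T_def using assms by (intro sum_mono mult_left_mono) auto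
  also have "\<dots> = real M * (1 / (pi * \<sigma>2))" by simp
  finally have "1 / real M * T \<le> 1 / real M * (real M * (1 / (pi * \<sigma>2)))"
    by (rule mult_left_mono) simp
  also have "\<dots> = 1 / (pi * \<sigma>2)" using assms by simp
  finally have "1 / real M * T \<le> 1 / (pi * \<sigma>2)" .
  moreover have "sp_ofdm_W M \<sigma>2 r s x = 1 / real M * T"
    unfolding sp_ofdm_W_def T_def by (rule refl)
  ultimately show ?thesis by simp
qed

lemma W_meas: "(\<lambda>x. sp_ofdm_W M \<sigma>2 r s x) \<in> borel_measurable borel"
  unfolding sp_ofdm_W_def by measurable

theorem theorem2:
  fixes \<Phi> :: "complex set" and \<sigma>2 :: real and M :: nat
  assumes "finite \<Phi>" and "\<exists>a\<in>\<Phi>. \<exists>b\<in>\<Phi>. a \<noteq> b"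
    and "\<sigma>2 > 0"
    and "M \<ge> 2" and "\<exists>k. M = 2 ^ k"
  shows "{F. aux_channel \<Phi> F \<and> symmetrizes (sp_ofdm_W M \<sigma>2) \<Phi> F} = {}
         \<and> \<not> l_symmetrizable (sp_ofdm_W M \<sigma>2) \<Phi>"
proof -
  obtain j where j: "M = 2 ^ j" using assms(5) by blast
  with assms(4) have "j \<noteq> 0" by (cases j) auto
  then obtain k where k: "M = k + k" "k > 0"
    using j by (intro that[of "2 ^ (j - 1)"]) (auto simp flip: power_Suc mult_2)
  have Mpos: "M > 0" using assms(4) by simp
  let ?W = "sp_ofdm_W M \<sigma>2"
  have main: "\<not> (aux_channel \<Phi> F \<and> symmetrizes ?W \<Phi> F)" for F
  proof
    assume H: "aux_channel \<Phi> F \<and> symmetrizes ?W \<Phi> F"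
    obtain a b where ab: "a \<in> \<Phi>" "b \<in> \<Phi>" "a \<noteq> b" using assms(2) by blast
    define g where "g r = (LINT x|F b. ?W r a x)" for r
    define h where "h r = (LINT x|F a. ?W r b x)" for r
    have gh: "g r = h r" for r
      using H ab unfolding symmetrizes_def g_def h_def by blast
    have gs: "g (2 * a - r) = g r" for r
      unfolding g_def k by (intro arg_cong[where f="integral\<^sup>L (F b)"] ext W_sym[OF k(2)])
    have hs: "h (2 * b - r) = h r" for r
      unfolding h_def k by (intro arg_cong[where f="integral\<^sup>L (F a)"] ext W_sym[OF k(2)])
    define d where "d = 2 * (b - a)"
    have dnz: "d \<noteq> 0" using ab unfolding d_def by simp
    have per: "g (r + d) = g r" for r
    proof -
      have "g (r + d) = h (2 * b - (r + d))" using gh hs by metis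
      also have "2 * b - (r + d) = 2 * a - r" unfolding d_def by (simp add: algebra_simps)
      also have "h (2 * a - r) = g r" using gh gs by metis
      finally show ?thesis .
    qed
    have gn: "g (of_nat n * d) = g 0" for n
    proof (induction n)
      case 0 then show ?case by simp
    next
      case (Suc n)
      have "g (of_nat (Suc n) * d) = g (of_nat n * d + d)" by (simp add: algebra_simps)
      then show ?case using per Suc by simp
    qed
    have ps: "prob_space (F b)" and sb: "sets (F b) = sets borel"
      using H ab unfolding aux_channel_def by auto
    interpret P: prob_space "F b" by (rule ps)
    have meas: "(\<lambda>x. ?W r a x) \<in> borel_measurable (F b)" for r
      using W_meas measurable_cong_sets[OF sb refl] by blast
    have conv: "(\<lambda>n. LINT x|F b. ?W (of_nat n * d) a x) \<longlonglongrightarrow> (LINT x|F b. 0)"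
      and intg: "\<And>n. integrable (F b) (\<lambda>x. ?W (of_nat n * d) a x)"
    proof -
      have "(\<lambda>x. 0::real) \<in> borel_measurable (F b)" by simp
      note DC = integral_dominated_convergence[OF this meas P.integrable_const[of "1 / (pi * \<sigma>2)"]]
        integrable_dominated_convergence2[OF this meas P.integrable_const[of "1 / (pi * \<sigma>2)"]]
      have lim: "AE x in F b. (\<lambda>n. ?W (of_nat n * d) a x) \<longlonglongrightarrow> 0"
        using W_lim[OF dnz assms(3)] by simp
      have bd: "AE x in F b. norm (?W (of_nat n * d) a x) \<le> 1 / (pi * \<sigma>2)" for n
        using W_le[OF Mpos assms(3)] W_pos[OF Mpos assms(3)] by (simp add: less_imp_le)
      show "(\<lambda>n. LINT x|F b. ?W (of_nat n * d) a x) \<longlonglongrightarrow> (LINT x|F b. 0)"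
        by (rule DC(1)[OF lim bd])
      show "\<And>n. integrable (F b) (\<lambda>x. ?W (of_nat n * d) a x)"
        by (rule DC(2)[OF lim bd])
    qed
    have "(\<lambda>n. g 0) \<longlonglongrightarrow> 0"
      using conv gn unfolding g_def by simp
    then have g0: "g 0 = 0" by (simp add: LIMSEQ_const_iff)
    have i0: "integrable (F b) (\<lambda>x. ?W 0 a x)" using intg[of 0] by simp
    have "AE x in F b. ?W 0 a x = 0"
      using g0 integral_nonneg_eq_0_iff_AE[OF i0] W_pos[OF Mpos assms(3)]
      unfolding g_def by (simp add: less_imp_le)
    moreover have pos: "?W 0 a x \<noteq> 0" for x
      using W_pos[OF Mpos assms(3), of 0 a x] by linarith
    ultimately have "AE x in F b. False"
      by simp
    then show False by simp
  qed
  have e: "{F. aux_channel \<Phi> F \<and> symmetrizes ?W \<Phi> F} = {}"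
    using main by auto
  moreover have "\<not> l_symmetrizable ?W \<Phi>"
    unfolding l_symmetrizable_def using main by auto
  ultimately show ?thesis by simp
qed

end
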